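(* Let $\alpha>0$, $\beta,\eta,\kappa\in\mathbb{R}$, $\rho>0$, $p\geq 1$, and $0\le a<x$. Let $f,g$ be two positive functions on $[0,\infty)$ with $f,g\in X^{p}_{c}(a,x)$ (for some $c\in\mathbb{R}$), such that ${}^{\rho}\mathcal{I}^{\alpha,\beta}_{a+,\eta,\kappa}f^{p}(x)<\infty$ and ${}^{\rho}\mathcal{I}^{\alpha,\beta}_{a+,\eta,\kappa}g^{p}(x)<\infty$. Suppose there are real numbers $m,M$ and $\gamma$ with $0<\gamma<m\leq \frac{f(t)}{g(t)}\leq M$ for all $t\in[a,x]$. Then $$\frac{M+1}{M-\gamma}\left({}^{\rho}\mathcal{I}^{\alpha,\beta}_{a+,\eta,\kappa}(f-\gamma g)^{p}(x)\right)^{1/p}\leq\left({}^{\rho}\mathcal{I}^{\alpha,\beta}_{a+,\eta,\kappa}f^{p}(x)\right)^{1/p}+\left({}^{\rho}\mathcal{I}^{\alpha,\beta}_{a+,\eta,\kappa}g^{p}(x)\right)^{1/p}\leq\frac{m+1}{m-\gamma}\left({}^{\rho}\mathcal{I}^{\alpha,\beta}_{a+,\eta,\kappa}(f-\gamma g)^{p}(x)\right)^{1/p}.$$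
   Context: For $c\in\mathbb{R}$ and $1\le p<\infty$, $X^{p}_{c}(a,b)$ denotes the space of Lebesgue measurable functions $f$ on $(a,b)$ with $\left(\int_a^b |t^{c}f(t)|^{p}\,\frac{dt}{t}\right)^{1/p}<\infty$. For $\alpha>0$, $\beta,\eta,\kappa\in\mathbb{R}$, $\rho>0$, $0\le a<x$, and a function $\varphi$, the generalized (Katugampola) fractional integral is $${}^{\rho}\mathcal{I}^{\alpha,\beta}_{a+,\eta,\kappa}\varphi(x)=\frac{\rho^{1-\beta}x^{\kappa}}{\Gamma(\alpha)}\int_{a}^{x}\frac{\tau^{\rho(\eta+1)-1}}{(x^{\rho}-\tau^{\rho})^{1-\alpha}}\varphi(\tau)\,d\tau,$$ whenever the integral exists. ${}^{\rho}\mathcal{I}^{\alpha,\beta}_{a+,\eta,\kappa}(f-\gamma g)^{p}(x)$ means the operator applied to $\tau\mapsto (f(\tau)-\gamma g(\tau))^p$, evaluated at $x$. *)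

theory Defs
  imports "HOL-Analysis.Analysis"
begin

definition in_Xpc :: "real \<Rightarrow> real \<Rightarrow> real \<Rightarrow> real \<Rightarrow> (real \<Rightarrow> real) \<Rightarrow> bool" where
  "in_Xpc c p a b f \<longleftrightarrow>
     set_borel_measurable lebesgue {a<..<b} f \<and>
     set_integrable lebesgue {a<..<b} (\<lambda>t. \<bar>t powr c * f t\<bar> powr p / t)"

definition kat_kernel :: "real \<Rightarrow> real \<Rightarrow> real \<Rightarrow> real \<Rightarrow> real \<Rightarrow> real" where
  "kat_kernel \<rho> \<alpha> \<eta> x \<tau> =
     \<tau> powr (\<rho> * (\<eta> + 1) - 1) / (x powr \<rho> - \<tau> powr \<rho>) powr (1 - \<alpha>)"

definition kat_integrable :: "real \<Rightarrow> real \<Rightarrow> real \<Rightarrow> real \<Rightarrow> (real \<Rightarrow> real) \<Rightarrow> real \<Rightarrow> bool" where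
  "kat_integrable \<rho> \<alpha> \<eta> a \<phi> x \<longleftrightarrow>
     set_integrable lebesgue {a<..<x} (\<lambda>\<tau>. kat_kernel \<rho> \<alpha> \<eta> x \<tau> * \<phi> \<tau>)"

definition kat_int :: "real \<Rightarrow> real \<Rightarrow> real \<Rightarrow> real \<Rightarrow> real \<Rightarrow> real \<Rightarrow> (real \<Rightarrow> real) \<Rightarrow> real \<Rightarrow> real" where
  "kat_int \<rho> \<alpha> \<beta> \<eta> \<kappa> a \<phi> x =
     \<rho> powr (1 - \<beta>) * x powr \<kappa> / Gamma \<alpha> *
     (LINT \<tau>:{a<..<x}|lebesgue. kat_kernel \<rho> \<alpha> \<eta> x \<tau> * \<phi> \<tau>)"

end

theory Submission
  imports Defs
begin

lemma kernel_meas: "(\<lambda>\<tau>. kat_kernel \<rho> \<alpha> \<eta> x \<tau>) \<in> borel_measurable lebesgue"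
  by (rule measurable_completion) (unfold kat_kernel_def, measurable)

lemma kernel_nonneg: "0 \<le> kat_kernel \<rho> \<alpha> \<eta> x \<tau>"
  unfolding kat_kernel_def by simp

lemma root_cmp:
  fixes u v K :: "real \<Rightarrow> real" and S :: "real set"
  assumes iu: "set_integrable lebesgue S (\<lambda>\<tau>. K \<tau> * u \<tau> powr p)"
    and iv: "set_integrable lebesgue S (\<lambda>\<tau>. K \<tau> * v \<tau> powr p)"
    and K0: "\<And>\<tau>. 0 \<le> K \<tau>" and u0: "\<And>\<tau>. \<tau> \<in> S \<Longrightarrow> 0 \<le> u \<tau>"
    and uv: "\<And>\<tau>. \<tau> \<in> S \<Longrightarrow> u \<tau> \<le> c * v \<tau>" and c: "c > 0" and C: "C > 0" and p: "p \<ge> 1"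
  shows "(C * (LINT \<tau>:S|lebesgue. K \<tau> * u \<tau> powr p)) powr (1/p)
     \<le> c * (C * (LINT \<tau>:S|lebesgue. K \<tau> * v \<tau> powr p)) powr (1/p)"
proof -
  have iv': "set_integrable lebesgue S (\<lambda>\<tau>. c powr p * (K \<tau> * v \<tau> powr p))"
    using iv by (rule set_integrable_mult_right)
  have pt: "K \<tau> * u \<tau> powr p \<le> c powr p * (K \<tau> * v \<tau> powr p)" if "\<tau> \<in> S" for \<tau>
  proof -
    have v0: "0 \<le> v \<tau>" using u0[OF that] uv[OF that] c
      by (meson dual_order.trans zero_le_mult_iff not_less)
    have "u \<tau> powr p \<le> (c * v \<tau>) powr p"
      using u0[OF that] uv[OF that] p by (intro powr_mono2) auto
    also have "\<dots> = c powr p * v \<tau> powr p" using c v0 by (simp add: powr_mult)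
    finally show ?thesis using K0[of \<tau>] by (metis mult.left_commute mult_left_mono)
  qed
  have L1: "(LINT \<tau>:S|lebesgue. K \<tau> * u \<tau> powr p) \<le> c powr p * (LINT \<tau>:S|lebesgue. K \<tau> * v \<tau> powr p)"
    using set_integral_mono[OF iu iv' pt] by simp
  have Lu0: "0 \<le> (LINT \<tau>:S|lebesgue. K \<tau> * u \<tau> powr p)"
    using set_integral_mono[of lebesgue S "\<lambda>_. 0" "\<lambda>\<tau>. K \<tau> * u \<tau> powr p", OF _ iu] K0
    by (simp add: set_integrable_def)
  have Lv0: "0 \<le> (LINT \<tau>:S|lebesgue. K \<tau> * v \<tau> powr p)"
    using set_integral_mono[of lebesgue S "\<lambda>_. 0" "\<lambda>\<tau>. K \<tau> * v \<tau> powr p", OF _ iv] K0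
    by (simp add: set_integrable_def)
  define Lu where "Lu = (LINT \<tau>:S|lebesgue. K \<tau> * u \<tau> powr p)"
  define Lv where "Lv = (LINT \<tau>:S|lebesgue. K \<tau> * v \<tau> powr p)"
  have "C * Lu \<le> c powr p * (C * Lv)" using L1 C unfolding Lu_def Lv_def
    by (simp add: mult.left_commute)
  hence "(C * Lu) powr (1/p) \<le> (c powr p * (C * Lv)) powr (1/p)"
    using Lu0 C p unfolding Lu_def by (intro powr_mono2) auto
  also have "\<dots> = (c powr p) powr (1/p) * (C * Lv) powr (1/p)"
    using Lv0 C c unfolding Lv_def by (simp add: powr_mult)
  also have "(c powr p) powr (1/p) = c" using c p by (simp add: powr_powr)
  finally have "(C * Lu) powr (1/p) \<le> c * (C * Lv) powr (1/p)" .
  thus ?thesis unfolding Lu_def Lv_def by simp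
qed

theorem theorem12:
  fixes \<alpha> \<beta> \<eta> \<kappa> \<rho> p a x c m M \<gamma> :: real
    and f g :: "real \<Rightarrow> real"
  assumes "\<alpha> > 0" and "\<rho> > 0" and "p \<ge> 1" and "0 \<le> a" and "a < x"
    and "\<And>t. t \<ge> 0 \<Longrightarrow> f t > 0" and "\<And>t. t \<ge> 0 \<Longrightarrow> g t > 0"
    and "in_Xpc c p a x f" and "in_Xpc c p a x g"
    and "kat_integrable \<rho> \<alpha> \<eta> a (\<lambda>\<tau>. f \<tau> powr p) x"
    and "kat_integrable \<rho> \<alpha> \<eta> a (\<lambda>\<tau>. g \<tau> powr p) x"
    and "0 < \<gamma>" and "\<gamma> < m"
    and "\<And>t. t \<in> {a..x} \<Longrightarrow> m \<le> f t / g t \<and> f t / g t \<le> M"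
  shows "((M + 1) / (M - \<gamma>) *
           kat_int \<rho> \<alpha> \<beta> \<eta> \<kappa> a (\<lambda>\<tau>. (f \<tau> - \<gamma> * g \<tau>) powr p) x powr (1 / p)
         \<le> kat_int \<rho> \<alpha> \<beta> \<eta> \<kappa> a (\<lambda>\<tau>. f \<tau> powr p) x powr (1 / p)
           + kat_int \<rho> \<alpha> \<beta> \<eta> \<kappa> a (\<lambda>\<tau>. g \<tau> powr p) x powr (1 / p))
       \<and> (kat_int \<rho> \<alpha> \<beta> \<eta> \<kappa> a (\<lambda>\<tau>. f \<tau> powr p) x powr (1 / p)
           + kat_int \<rho> \<alpha> \<beta> \<eta> \<kappa> a (\<lambda>\<tau>. g \<tau> powr p) x powr (1 / p)
         \<le> (m + 1) / (m - \<gamma>) *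
           kat_int \<rho> \<alpha> \<beta> \<eta> \<kappa> a (\<lambda>\<tau>. (f \<tau> - \<gamma> * g \<tau>) powr p) x powr (1 / p))"
proof -
  note A = assms
  define S where "S = {a<..<x}"
  define K where "K = kat_kernel \<rho> \<alpha> \<eta> x"
  define C where "C = \<rho> powr (1 - \<beta>) * x powr \<kappa> / Gamma \<alpha>"
  have C0: "C > 0" using A(1,2,4,5) unfolding C_def by auto
  have K0: "\<And>\<tau>. 0 \<le> K \<tau>" unfolding K_def by (rule kernel_nonneg)
  have ki: "\<And>\<phi>. kat_int \<rho> \<alpha> \<beta> \<eta> \<kappa> a \<phi> x = C * (LINT \<tau>:S|lebesgue. K \<tau> * \<phi> \<tau>)"
    unfolding kat_int_def C_def S_def K_def by simp
  have fp: "\<And>\<tau>. \<tau> \<in> S \<Longrightarrow> f \<tau> > 0" and gp: "\<And>\<tau>. \<tau> \<in> S \<Longrightarrow> g \<tau> > 0"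
    using A(4,6,7) unfolding S_def by auto
  have lo: "\<And>\<tau>. \<tau> \<in> S \<Longrightarrow> m * g \<tau> \<le> f \<tau>"
  proof -
    fix \<tau> assume t: "\<tau> \<in> S"
    hence "m \<le> f \<tau> / g \<tau>" using A(14)[of \<tau>] unfolding S_def by auto
    thus "m * g \<tau> \<le> f \<tau>" using gp[OF t] by (simp add: le_divide_eq)
  qed
  have hi: "\<And>\<tau>. \<tau> \<in> S \<Longrightarrow> f \<tau> \<le> M * g \<tau>"
  proof -
    fix \<tau> assume t: "\<tau> \<in> S"
    hence "f \<tau> / g \<tau> \<le> M" using A(14)[of \<tau>] unfolding S_def by auto
    thus "f \<tau> \<le> M * g \<tau>" using gp[OF t] by (simp add: divide_le_eq)
  qed
  have mM: "m \<le> M" using A(14)[of a] A(5) by auto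
  have diff0: "\<And>\<tau>. \<tau> \<in> S \<Longrightarrow> 0 \<le> f \<tau> - \<gamma> * g \<tau>"
  proof -
    fix \<tau> assume t: "\<tau> \<in> S"
    have "\<gamma> * g \<tau> \<le> m * g \<tau>" using A(13) gp[OF t] by simp
    thus "0 \<le> f \<tau> - \<gamma> * g \<tau>" using lo[OF t] by simp
  qed
  have iF: "set_integrable lebesgue S (\<lambda>\<tau>. K \<tau> * f \<tau> powr p)"
    using A(10) unfolding kat_integrable_def S_def K_def .
  have iG: "set_integrable lebesgue S (\<lambda>\<tau>. K \<tau> * g \<tau> powr p)"
    using A(11) unfolding kat_integrable_def S_def K_def .
  have mf: "(\<lambda>\<tau>. indicator S \<tau> *\<^sub>R f \<tau>) \<in> borel_measurable lebesgue"
    using A(8) unfolding in_Xpc_def set_borel_measurable_def S_def by auto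
  have mg: "(\<lambda>\<tau>. indicator S \<tau> *\<^sub>R g \<tau>) \<in> borel_measurable lebesgue"
    using A(9) unfolding in_Xpc_def set_borel_measurable_def S_def by auto
  have mK: "K \<in> borel_measurable lebesgue" unfolding K_def by (rule kernel_meas)
  have meq: "(\<lambda>\<tau>. indicator S \<tau> *\<^sub>R (K \<tau> * (f \<tau> - \<gamma> * g \<tau>) powr p))
     = (\<lambda>\<tau>. indicator S \<tau> *\<^sub>R (K \<tau> * ((indicator S \<tau> *\<^sub>R f \<tau>) - \<gamma> * (indicator S \<tau> *\<^sub>R g \<tau>)) powr p))"
    by (auto simp: indicator_def)
  have mD: "set_borel_measurable lebesgue S (\<lambda>\<tau>. K \<tau> * (f \<tau> - \<gamma> * g \<tau>) powr p)"
    unfolding set_borel_measurable_def meq unfolding S_def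
    by (intro borel_measurable_scaleR borel_measurable_indicator borel_measurable_times powr_real_measurable
      borel_measurable_diff mf[unfolded S_def] mg[unfolded S_def] mK borel_measurable_const) auto
  have iD: "set_integrable lebesgue S (\<lambda>\<tau>. K \<tau> * (f \<tau> - \<gamma> * g \<tau>) powr p)"
  proof (rule set_integrable_bound[OF iF mD], rule AE_I2, intro impI)
    fix \<tau> assume t: "\<tau> \<in> S"
    have "(f \<tau> - \<gamma> * g \<tau>) powr p \<le> f \<tau> powr p"
      using diff0[OF t] A(3,12) gp[OF t] by (intro powr_mono2) auto
    thus "norm (K \<tau> * (f \<tau> - \<gamma> * g \<tau>) powr p) \<le> norm (K \<tau> * f \<tau> powr p)"
      using K0[of \<tau>] diff0[OF t] by (simp add: abs_mult mult_left_mono)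
  qed
  define F where "F = kat_int \<rho> \<alpha> \<beta> \<eta> \<kappa> a (\<lambda>\<tau>. f \<tau> powr p) x powr (1 / p)"
  define G where "G = kat_int \<rho> \<alpha> \<beta> \<eta> \<kappa> a (\<lambda>\<tau>. g \<tau> powr p) x powr (1 / p)"
  define R where "R = kat_int \<rho> \<alpha> \<beta> \<eta> \<kappa> a (\<lambda>\<tau>. (f \<tau> - \<gamma> * g \<tau>) powr p) x powr (1 / p)"
  have Mg: "M - \<gamma> > 0" "M > 0" "m - \<gamma> > 0" "m > 0" using mM A(12,13) by auto
  have a1: "R \<le> (M - \<gamma>) / M * F" unfolding R_def F_def ki
  proof (rule root_cmp[OF iD iF K0 diff0 _ _ C0 A(3)])
    fix \<tau> assume t: "\<tau> \<in> S"
    have "\<gamma> * f \<tau> \<le> \<gamma> * (M * g \<tau>)" using hi[OF t] A(12) by simp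
    hence "M * (f \<tau> - \<gamma> * g \<tau>) \<le> (M - \<gamma>) * f \<tau>" by (simp add: algebra_simps)
    thus "f \<tau> - \<gamma> * g \<tau> \<le> (M - \<gamma>) / M * f \<tau>" using Mg by (simp add: field_simps)
  qed (use Mg in auto)
  have a2: "R \<le> (M - \<gamma>) * G" unfolding R_def G_def ki
  proof (rule root_cmp[OF iD iG K0 diff0 _ _ C0 A(3)])
    fix \<tau> assume t: "\<tau> \<in> S"
    show "f \<tau> - \<gamma> * g \<tau> \<le> (M - \<gamma>) * g \<tau>" using hi[OF t] by (simp add: algebra_simps)
  qed (use Mg in auto)
  have a3: "F \<le> m / (m - \<gamma>) * R" unfolding R_def F_def ki
  proof (rule root_cmp[OF iF iD K0 _ _ _ C0 A(3)])
    fix \<tau> assume t: "\<tau> \<in> S"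
    show "0 \<le> f \<tau>" using fp[OF t] by simp
    have "\<gamma> * (m * g \<tau>) \<le> \<gamma> * f \<tau>" using lo[OF t] A(12) by simp
    hence "(m - \<gamma>) * f \<tau> \<le> m * (f \<tau> - \<gamma> * g \<tau>)" by (simp add: algebra_simps)
    thus "f \<tau> \<le> m / (m - \<gamma>) * (f \<tau> - \<gamma> * g \<tau>)" using Mg by (simp add: field_simps)
  qed (use Mg in auto)
  have a4: "G \<le> 1 / (m - \<gamma>) * R" unfolding R_def G_def ki
  proof (rule root_cmp[OF iG iD K0 _ _ _ C0 A(3)])
    fix \<tau> assume t: "\<tau> \<in> S"
    show "0 \<le> g \<tau>" using gp[OF t] by simp
    have "(m - \<gamma>) * g \<tau> \<le> f \<tau> - \<gamma> * g \<tau>" using lo[OF t] by (simp add: algebra_simps)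
    thus "g \<tau> \<le> 1 / (m - \<gamma>) * (f \<tau> - \<gamma> * g \<tau>)" using Mg by (simp add: field_simps)
  qed (use Mg in auto)
  have b1: "M / (M - \<gamma>) * R \<le> F" using a1 Mg by (simp add: field_simps)
  have b2: "1 / (M - \<gamma>) * R \<le> G" using a2 Mg by (simp add: field_simps)
  have e1: "(M + 1) / (M - \<gamma>) * R = M / (M - \<gamma>) * R + 1 / (M - \<gamma>) * R"
    by (simp only: add_divide_distrib distrib_right)
  have e2: "(m + 1) / (m - \<gamma>) * R = m / (m - \<gamma>) * R + 1 / (m - \<gamma>) * R"
    by (simp only: add_divide_distrib distrib_right)
  show ?thesis
    using b1 b2 a3 a4 e1 e2 unfolding F_def[symmetric] G_def[symmetric] R_def[symmetric] by linarith
qed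

end
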